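(* Let $T$ be a decomposition tree of a distance-hereditary graph $G$, and let $v$ be an internal node of $T$ with left child $v_l$ and right child $v_r$. If $v$ is labeled $\odot$, then $\hat\gamma_p(v)=\hat\gamma_p(v_l)+\hat\gamma_p(v_r)$; otherwise (i.e. $v$ is labeled $\otimes$ or $\oplus$), $\hat\gamma_p(v)=\hat\gamma_0(v)+2\cdot\hat{mty}_{pr}(v)$.
   Context: All graphs are finite, simple, undirected. For a graph $H$ and $S\subseteq V(H)$, $N_H[S]$ is $S$ together with all vertices adjacent to a vertex of $S$, and $H[S]$ is the induced subgraph. Graphs carry a "twin set": a single-vertex graph on $x$ has twin set $\{x\}$. For vertex-disjoint graphs $G_l,G_r$ with twin sets $TS(G_l),TS(G_r)$: the true twin operation $G_l\otimes G_r$ has vertex set $V(G_l)\cup V(G_r)$, edge set $E(G_l)\cup E(G_r)\cup\{uw: u\in TS(G_l), w\in TS(G_r)\}$ and twin set $TS(G_l)\cup TS(G_r)$; the false twin operation $G_l\odot G_r$ has vertex set $V(G_l)\cup V(G_r)$, edge set $E(G_l)\cup E(G_r)$ and twin set $TS(G_l)\cup TS(G_r)$; the attachment operation $G_l\oplus G_r$ has the same vertex and edge sets as $G_l\otimes G_r$ and twin set $TS(G_l)$. A decomposition tree $T$ of $G$ is a rooted binary tree whose leaves are in bijection with $V(G)$, each internal node having a left and a right child and a label in $\{\otimes,\odot,\oplus\}$; for each node $v$ define $\hat G(v)$ and $\hat{TS}(v)$ recursively: for a leaf $x$, the single-vertex graph on $x$ with twin set $\{x\}$; for an internal node $v$ with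 label $\circ$ and children $v_l,v_r$, $\hat G(v)=\hat G(v_l)\circ\hat G(v_r)$ with the corresponding twin set; and one requires $\hat G(\text{root})=G$. Then $\hat G(v)$ is the subgraph of $G$ induced by the set $\hat V(v)$ of leaves below $v$. (A graph is distance-hereditary iff it has a decomposition tree.) For a node $v$ and $0\le k\le|\hat{TS}(v)|$, call $S\subseteq\hat V(v)$ $k$-feasible if $\hat V(v)\setminus\hat{TS}(v)\subseteq N_{\hat G(v)}[S]$ and there is $X\subseteq S\cap\hat{TS}(v)$ with $|X|=k$ such that $\hat G(v)[S\setminus X]$ has a perfect matching. $\hat\gamma_k(v)$ is the minimum size of a $k$-feasible set and $\hat D_k(v)$ the family of $k$-feasible sets of that size. A paired-dominating set of a graph $H$ is a dominating set $D$ of $H$ such that $H[D]$ has a perfect matching; $\gamma_p(H)$ is the minimum size of a paired-dominating set of $H$ ($\infty$ if none exists). Set $\hat\gamma_p(v)=\gamma_p(\hat G(v))$, and let $\hat D_p(v)$ be the family of paired-dominating sets of $\hat G(v)$ of size $\hat\gamma_p(v)$. Define $\hat{mty}_{pr}(v)=1$ if $\hat D_p(v)\cap\hat D_0(v)=\emptyset$ and $\hat{mty}_{pr}(v)=0$ otherwise. *)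

theory Defs
  imports Main "HOL-Library.Extended_Nat"
begin

text \<open>Graphs: a vertex set V and an edge set E of 2-element subsets of V.\<close>

definition closed_nbhd :: "'a set \<Rightarrow> 'a set set \<Rightarrow> 'a set \<Rightarrow> 'a set" where
  "closed_nbhd V E S = S \<union> {u \<in> V. \<exists>w\<in>S. {u, w} \<in> E}"

definition has_perfect_matching :: "'a set set \<Rightarrow> 'a set \<Rightarrow> bool" where
  "has_perfect_matching E S \<longleftrightarrow>
     (\<exists>M. M \<subseteq> {e \<in> E. e \<subseteq> S} \<and> (\<forall>x\<in>S. \<exists>!e. e \<in> M \<and> x \<in> e))"

definition paired_dom_set :: "'a set \<Rightarrow> 'a set set \<Rightarrow> 'a set \<Rightarrow> bool" where
  "paired_dom_set V E D \<longleftrightarrow> D \<subseteq> V \<and> V \<subseteq> closed_nbhd V E D \<and> has_perfect_matching E D"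

definition gamma_pr :: "'a set \<Rightarrow> 'a set set \<Rightarrow> enat" where
  "gamma_pr V E = Inf {enat (card D) | D. paired_dom_set V E D}"

datatype label = TrueTwin | FalseTwin | Attach

datatype 'a dtree = Leaf 'a | Node label "'a dtree" "'a dtree"

fun tverts :: "'a dtree \<Rightarrow> 'a set" where
  "tverts (Leaf x) = {x}"
| "tverts (Node _ l r) = tverts l \<union> tverts r"

fun tts :: "'a dtree \<Rightarrow> 'a set" where
  "tts (Leaf x) = {x}"
| "tts (Node TrueTwin l r) = tts l \<union> tts r"
| "tts (Node FalseTwin l r) = tts l \<union> tts r"
| "tts (Node Attach l r) = tts l"

fun tedges :: "'a dtree \<Rightarrow> 'a set set" where
  "tedges (Leaf x) = {}"
| "tedges (Node TrueTwin l r) = tedges l \<union> tedges r \<union> {{u, w} | u w. u \<in> tts l \<and> w \<in> tts r}"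
| "tedges (Node FalseTwin l r) = tedges l \<union> tedges r"
| "tedges (Node Attach l r) = tedges l \<union> tedges r \<union> {{u, w} | u w. u \<in> tts l \<and> w \<in> tts r}"

fun wf_dtree :: "'a dtree \<Rightarrow> bool" where
  "wf_dtree (Leaf x) = True"
| "wf_dtree (Node _ l r) = (wf_dtree l \<and> wf_dtree r \<and> tverts l \<inter> tverts r = {})"

fun subtrees :: "'a dtree \<Rightarrow> 'a dtree set" where
  "subtrees (Leaf x) = {Leaf x}"
| "subtrees (Node c l r) = insert (Node c l r) (subtrees l \<union> subtrees r)"

definition is_decomp_tree :: "'a set \<Rightarrow> 'a set set \<Rightarrow> 'a dtree \<Rightarrow> bool" where
  "is_decomp_tree V E T \<longleftrightarrow> wf_dtree T \<and> tverts T = V \<and> tedges T = E"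

text \<open>Node quantities: the subtree rooted at v represents the node v.\<close>
definition gp_hat :: "'a dtree \<Rightarrow> enat" where
  "gp_hat v = gamma_pr (tverts v) (tedges v)"

definition k_feasible :: "nat \<Rightarrow> 'a dtree \<Rightarrow> 'a set \<Rightarrow> bool" where
  "k_feasible k v S \<longleftrightarrow> S \<subseteq> tverts v \<and>
     tverts v - tts v \<subseteq> closed_nbhd (tverts v) (tedges v) S \<and>
     (\<exists>X. X \<subseteq> S \<inter> tts v \<and> card X = k \<and> has_perfect_matching (tedges v) (S - X))"

definition gk_hat :: "nat \<Rightarrow> 'a dtree \<Rightarrow> enat" where
  "gk_hat k v = Inf {enat (card S) | S. k_feasible k v S}"

definition Dk_hat :: "nat \<Rightarrow> 'a dtree \<Rightarrow> 'a set set" where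
  "Dk_hat k v = {S. k_feasible k v S \<and> enat (card S) = gk_hat k v}"

definition Dp_hat :: "'a dtree \<Rightarrow> 'a set set" where
  "Dp_hat v = {D. paired_dom_set (tverts v) (tedges v) D \<and> enat (card D) = gp_hat v}"

definition mty_pr :: "'a dtree \<Rightarrow> nat" where
  "mty_pr v = (if Dp_hat v \<inter> Dk_hat 0 v = {} then 1 else 0)"

end

theory Submission
  imports Defs
begin

lemma Inf_card_le: "P D \<Longrightarrow> Inf {enat (card D) | D. P D} \<le> enat (card D)"
  by (rule Inf_lower) blast

lemma Inf_card_ex: assumes "\<exists>D. P D"
  shows "\<exists>D. P D \<and> Inf {enat (card D) | D. P D} = enat (card D)"
proof -
  let ?A = "{enat (card D) | D. P D}"
  obtain D0 where D0: "P D0" using assms by blast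
  have m: "enat (card D0) \<in> ?A" using D0 by blast
  then have ne: "?A \<noteq> {}" by blast
  have "(LEAST x. x \<in> ?A) \<in> ?A" by (rule LeastI[of "\<lambda>x. x \<in> ?A", OF m])
  then have "Inf ?A \<in> ?A" unfolding Inf_enat_def using ne by simp
  then show ?thesis by blast
qed

lemma Inf_card_none: "\<not>(\<exists>D. P D) \<Longrightarrow> Inf {enat (card D) | D. P D} = \<infinity>"
  by (simp add: top_enat_def)

lemma tree_facts: "wf_dtree t \<Longrightarrow> finite (tverts t) \<and> tts t \<subseteq> tverts t \<and> tts t \<noteq> {} \<and>
   (\<forall>e\<in>tedges t. e \<subseteq> tverts t \<and> card e = 2)"
proof (induction t)
  case (Leaf x)
  then show ?case by simp
next
  case (Node c l r)
  have IH: "finite (tverts l)" "tts l \<subseteq> tverts l" "tts l \<noteq> {}" "\<forall>e\<in>tedges l. e \<subseteq> tverts l \<and> card e = 2"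
     "finite (tverts r)" "tts r \<subseteq> tverts r" "tts r \<noteq> {}" "\<forall>e\<in>tedges r. e \<subseteq> tverts r \<and> card e = 2"
    and dj: "tverts l \<inter> tverts r = {}" using Node by auto
  have X: "\<forall>e\<in>{{u, w} | u w. u \<in> tts l \<and> w \<in> tts r}. e \<subseteq> tverts l \<union> tverts r \<and> card e = 2"
  proof
    fix e assume "e \<in> {{u, w} | u w. u \<in> tts l \<and> w \<in> tts r}"
    then obtain u w where "e = {u,w}" "u \<in> tts l" "w \<in> tts r" by blast
    moreover have "u \<noteq> w" using calculation IH dj by blast
    ultimately show "e \<subseteq> tverts l \<union> tverts r \<and> card e = 2" using IH by auto
  qed
  have E: "tedges (Node c l r) \<subseteq> tedges l \<union> tedges r \<union> {{u, w} | u w. u \<in> tts l \<and> w \<in> tts r}"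
    by (cases c) auto
  have E2: "\<forall>e\<in>tedges (Node c l r). e \<subseteq> tverts (Node c l r) \<and> card e = 2"
  proof
    fix e assume "e \<in> tedges (Node c l r)"
    then have "e \<in> tedges l \<or> e \<in> tedges r \<or> e \<in> {{u, w} | u w. u \<in> tts l \<and> w \<in> tts r}" using E by blast
    then show "e \<subseteq> tverts (Node c l r) \<and> card e = 2"
    proof (elim disjE)
      assume "e \<in> {{u, w} | u w. u \<in> tts l \<and> w \<in> tts r}"
      then show ?thesis using X by simp
    qed (use IH in auto)
  qed
  have T: "tts (Node c l r) \<subseteq> tts l \<union> tts r" "tts l \<subseteq> tts (Node c l r)" by (cases c; auto)+
  show ?case using E2 T IH by auto
qed

lemma subtree_wf: "v \<in> subtrees t \<Longrightarrow> wf_dtree t \<Longrightarrow> wf_dtree v"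
  by (induction t) auto

lemma pm_even: assumes "has_perfect_matching E S" "finite S" "\<forall>e\<in>E. card e = 2"
  shows "even (card S)"
proof -
  obtain M where M: "M \<subseteq> {e \<in> E. e \<subseteq> S}" "\<forall>x\<in>S. \<exists>!e. e \<in> M \<and> x \<in> e"
    using assms(1) unfolding has_perfect_matching_def by blast
  have SU: "S = \<Union>M" using M by blast
  have fM: "finite M" using M(1) assms(2) by (metis (no_types, lifting) finite_Pow_iff mem_Collect_eq rev_finite_subset subsetI PowI subset_eq)
  have dj: "pairwise disjnt M"
    unfolding pairwise_def disjnt_def
  proof (intro ballI impI)
    fix a b assume ab: "a \<in> M" "b \<in> M" "a \<noteq> b"
    show "a \<inter> b = {}"
    proof (rule ccontr)
      assume "a \<inter> b \<noteq> {}"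
      then obtain x where "x \<in> a" "x \<in> b" by blast
      moreover have "x \<in> S" using M(1) ab \<open>x \<in> a\<close> by blast
      ultimately show False using M(2) ab by metis
    qed
  qed
  have fin: "\<forall>A\<in>M. finite A" using M(1) assms(2) finite_subset by blast
  have "card S = sum card M" using SU card_Union_disjoint[OF dj] fin by simp
  also have "\<dots> = sum (\<lambda>_. 2) M" using M(1) assms(3) by (intro sum.cong) auto
  also have "\<dots> = 2 * card M" by simp
  finally show ?thesis by simp
qed


lemma pds_restrict:
  assumes "paired_dom_set (Vl \<union> Vr) (El \<union> Er) D" "Vl \<inter> Vr = {}"
    "\<forall>e\<in>El. e \<subseteq> Vl" "\<forall>e\<in>Er. e \<subseteq> Vr"
  shows "paired_dom_set Vl El (D \<inter> Vl)"
proof -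
  have D: "D \<subseteq> Vl \<union> Vr" "Vl \<union> Vr \<subseteq> closed_nbhd (Vl \<union> Vr) (El \<union> Er) D"
    and pm0: "has_perfect_matching (El \<union> Er) D"
    using assms(1) unfolding paired_dom_set_def by simp_all
  obtain M where M: "M \<subseteq> {e \<in> El \<union> Er. e \<subseteq> D}" "\<forall>x\<in>D. \<exists>!e. e \<in> M \<and> x \<in> e"
    using pm0 unfolding has_perfect_matching_def by blast
  have notEr: "\<And>e x. x \<in> Vl \<Longrightarrow> x \<in> e \<Longrightarrow> e \<notin> Er"
  proof
    fix e x assume "x \<in> Vl" "x \<in> e" "e \<in> Er"
    then have "x \<in> Vr" using assms(4) by blast
    then show False using \<open>x \<in> Vl\<close> assms(2) by blast
  qed
  have dom: "Vl \<subseteq> closed_nbhd Vl El (D \<inter> Vl)"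
  proof
    fix x assume x: "x \<in> Vl"
    then have "x \<in> closed_nbhd (Vl \<union> Vr) (El \<union> Er) D" using D(2) by blast
    then have "x \<in> D \<or> (\<exists>w\<in>D. {x, w} \<in> El \<union> Er)" unfolding closed_nbhd_def by auto
    then show "x \<in> closed_nbhd Vl El (D \<inter> Vl)"
    proof
      assume "x \<in> D" then show ?thesis using x unfolding closed_nbhd_def by simp
    next
      assume "\<exists>w\<in>D. {x, w} \<in> El \<union> Er"
      then obtain w where w: "w \<in> D" "{x,w} \<in> El \<union> Er" by blast
      have "{x,w} \<notin> Er" using notEr[of x "{x,w}"] x by simp
      then have xw: "{x,w} \<in> El" using w by simp
      then have "{x,w} \<subseteq> Vl" using assms(3) xw by blast
      then have "w \<in> Vl" by simp
      then show ?thesis using x w xw unfolding closed_nbhd_def by auto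
    qed
  qed
  have pm: "has_perfect_matching El (D \<inter> Vl)"
    unfolding has_perfect_matching_def
  proof (intro exI conjI)
    show "{e \<in> M. e \<in> El} \<subseteq> {e \<in> El. e \<subseteq> D \<inter> Vl}" using M(1) assms(3) by blast
    show "\<forall>x\<in>D \<inter> Vl. \<exists>!e. e \<in> {e \<in> M. e \<in> El} \<and> x \<in> e"
    proof
      fix x assume x: "x \<in> D \<inter> Vl"
      then have "\<exists>!e. e \<in> M \<and> x \<in> e" using M(2) by simp
      then obtain e where e: "e \<in> M" "x \<in> e" and uq: "\<And>e'. e' \<in> M \<and> x \<in> e' \<Longrightarrow> e' = e" by (elim ex1E) blast
      have "e \<notin> Er" using notEr[of x e] x e by simp
      then have "e \<in> El" using e M(1) by blast
      show "\<exists>!e. e \<in> {e \<in> M. e \<in> El} \<and> x \<in> e"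
      proof (rule ex1I[of _ e])
        show "e \<in> {e \<in> M. e \<in> El} \<and> x \<in> e" using e \<open>e \<in> El\<close> by simp
      next
        fix e' assume "e' \<in> {e \<in> M. e \<in> El} \<and> x \<in> e'"
        then show "e' = e" using uq by simp
      qed
    qed
  qed
  have "D \<inter> Vl \<subseteq> Vl" by simp
  then show ?thesis unfolding paired_dom_set_def using dom pm by simp
qed
lemma pds_union:
  assumes "paired_dom_set Vl El Dl" "paired_dom_set Vr Er Dr" "Vl \<inter> Vr = {}"
    "\<forall>e\<in>El. e \<subseteq> Vl" "\<forall>e\<in>Er. e \<subseteq> Vr"
  shows "paired_dom_set (Vl \<union> Vr) (El \<union> Er) (Dl \<union> Dr)"
proof -
  have A: "Dl \<subseteq> Vl" "Vl \<subseteq> closed_nbhd Vl El Dl" "has_perfect_matching El Dl"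
    using assms(1) unfolding paired_dom_set_def by simp_all
  have B: "Dr \<subseteq> Vr" "Vr \<subseteq> closed_nbhd Vr Er Dr" "has_perfect_matching Er Dr"
    using assms(2) unfolding paired_dom_set_def by simp_all
  have cm: "closed_nbhd Vl El Dl \<subseteq> closed_nbhd (Vl \<union> Vr) (El \<union> Er) (Dl \<union> Dr)"
    "closed_nbhd Vr Er Dr \<subseteq> closed_nbhd (Vl \<union> Vr) (El \<union> Er) (Dl \<union> Dr)"
    unfolding closed_nbhd_def by auto
  have dom: "Vl \<union> Vr \<subseteq> closed_nbhd (Vl \<union> Vr) (El \<union> Er) (Dl \<union> Dr)"
    using A(2) B(2) cm by blast
  obtain Ml where Ml: "Ml \<subseteq> {e \<in> El. e \<subseteq> Dl}" "\<forall>x\<in>Dl. \<exists>!e. e \<in> Ml \<and> x \<in> e"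
    using A(3) unfolding has_perfect_matching_def by blast
  obtain Mr where Mr: "Mr \<subseteq> {e \<in> Er. e \<subseteq> Dr}" "\<forall>x\<in>Dr. \<exists>!e. e \<in> Mr \<and> x \<in> e"
    using B(3) unfolding has_perfect_matching_def by blast
  have pm: "has_perfect_matching (El \<union> Er) (Dl \<union> Dr)"
    unfolding has_perfect_matching_def
  proof (intro exI conjI)
    show "Ml \<union> Mr \<subseteq> {e \<in> El \<union> Er. e \<subseteq> Dl \<union> Dr}" using Ml(1) Mr(1) by blast
    show "\<forall>x\<in>Dl \<union> Dr. \<exists>!e. e \<in> Ml \<union> Mr \<and> x \<in> e"
    proof
      fix x assume "x \<in> Dl \<union> Dr"
      then show "\<exists>!e. e \<in> Ml \<union> Mr \<and> x \<in> e"
      proof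
        assume x: "x \<in> Dl"
        then have "x \<notin> Dr" using A(1) B(1) assms(3) by blast
        then have nr: "\<forall>e\<in>Mr. x \<notin> e" using Mr(1) by blast
        have "\<exists>!e. e \<in> Ml \<and> x \<in> e" using Ml(2) x by simp
        then obtain e where e: "e \<in> Ml" "x \<in> e" and uq: "\<And>e'. e' \<in> Ml \<and> x \<in> e' \<Longrightarrow> e' = e" by (elim ex1E) blast
        show ?thesis
        proof (rule ex1I[of _ e])
          show "e \<in> Ml \<union> Mr \<and> x \<in> e" using e by simp
        next
          fix e' assume "e' \<in> Ml \<union> Mr \<and> x \<in> e'"
          then show "e' = e" using uq nr by blast
        qed
      next
        assume x: "x \<in> Dr"
        then have "x \<notin> Dl" using A(1) B(1) assms(3) by blast
        then have nr: "\<forall>e\<in>Ml. x \<notin> e" using Ml(1) by blast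
        have "\<exists>!e. e \<in> Mr \<and> x \<in> e" using Mr(2) x by simp
        then obtain e where e: "e \<in> Mr" "x \<in> e" and uq: "\<And>e'. e' \<in> Mr \<and> x \<in> e' \<Longrightarrow> e' = e" by (elim ex1E) blast
        show ?thesis
        proof (rule ex1I[of _ e])
          show "e \<in> Ml \<union> Mr \<and> x \<in> e" using e by simp
        next
          fix e' assume "e' \<in> Ml \<union> Mr \<and> x \<in> e'"
          then show "e' = e" using uq nr by blast
        qed
      qed
    qed
  qed
  have "Dl \<union> Dr \<subseteq> Vl \<union> Vr" using A(1) B(1) by blast
  then show ?thesis using dom pm unfolding paired_dom_set_def by simp
qed

lemma false_twin:
  assumes wf: "wf_dtree (Node FalseTwin l r)"
  shows "gp_hat (Node FalseTwin l r) = gp_hat l + gp_hat r"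
proof -
  let ?Vl = "tverts l" and ?Vr = "tverts r" and ?El = "tedges l" and ?Er = "tedges r"
  have fl: "finite ?Vl" "\<forall>e\<in>?El. e \<subseteq> ?Vl" using tree_facts[of l] wf by auto
  have fr: "finite ?Vr" "\<forall>e\<in>?Er. e \<subseteq> ?Vr" using tree_facts[of r] wf by auto
  have dj: "?Vl \<inter> ?Vr = {}" using wf by simp
  have v: "gp_hat (Node FalseTwin l r) = gamma_pr (?Vl \<union> ?Vr) (?El \<union> ?Er)"
    unfolding gp_hat_def by simp
  have dj': "?Vr \<inter> ?Vl = {}" using dj by blast
  show ?thesis
  proof (cases "(\<exists>D. paired_dom_set ?Vl ?El D) \<and> (\<exists>D. paired_dom_set ?Vr ?Er D)")
    case True
    have "\<exists>Dl. paired_dom_set ?Vl ?El Dl \<and> gp_hat l = enat (card Dl)"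
      unfolding gp_hat_def gamma_pr_def by (rule Inf_card_ex) (use True in blast)
    then obtain Dl where Dl: "paired_dom_set ?Vl ?El Dl" "gp_hat l = enat (card Dl)" by blast
    have "\<exists>Dr. paired_dom_set ?Vr ?Er Dr \<and> gp_hat r = enat (card Dr)"
      unfolding gp_hat_def gamma_pr_def by (rule Inf_card_ex) (use True in blast)
    then obtain Dr where Dr: "paired_dom_set ?Vr ?Er Dr" "gp_hat r = enat (card Dr)" by blast
    have U: "paired_dom_set (?Vl \<union> ?Vr) (?El \<union> ?Er) (Dl \<union> Dr)"
      using pds_union[OF Dl(1) Dr(1) dj fl(2) fr(2)] .
    have sub: "Dl \<subseteq> ?Vl" "Dr \<subseteq> ?Vr" using Dl(1) Dr(1) unfolding paired_dom_set_def by auto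
    have cu: "card (Dl \<union> Dr) = card Dl + card Dr"
      using sub dj fl(1) fr(1) by (meson card_Un_disjoint disjoint_iff finite_subset subsetD)
    have le: "gp_hat (Node FalseTwin l r) \<le> gp_hat l + gp_hat r"
      unfolding v gamma_pr_def using Inf_card_le[of "paired_dom_set (?Vl \<union> ?Vr) (?El \<union> ?Er)", OF U]
      by (simp add: Dl(2) Dr(2) cu)
    have ge: "gp_hat l + gp_hat r \<le> gp_hat (Node FalseTwin l r)"
      unfolding v gamma_pr_def
    proof (rule Inf_greatest)
      fix x assume "x \<in> {enat (card D) |D. paired_dom_set (?Vl \<union> ?Vr) (?El \<union> ?Er) D}"
      then obtain D where D: "paired_dom_set (?Vl \<union> ?Vr) (?El \<union> ?Er) D" "x = enat (card D)" by blast
      have a: "paired_dom_set ?Vl ?El (D \<inter> ?Vl)" using pds_restrict[OF D(1) dj fl(2) fr(2)] .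
      have b: "paired_dom_set ?Vr ?Er (D \<inter> ?Vr)"
        using pds_restrict[of ?Vr ?Vl ?Er ?El D] D(1) dj' fl(2) fr(2) by (simp add: Un_commute)
      have Dsub: "D \<subseteq> ?Vl \<union> ?Vr" using D(1) unfolding paired_dom_set_def by auto
      have "card D = card (D \<inter> ?Vl) + card (D \<inter> ?Vr)"
      proof -
        have "D = (D \<inter> ?Vl) \<union> (D \<inter> ?Vr)" using Dsub by blast
        moreover have "finite (D \<inter> ?Vl)" "finite (D \<inter> ?Vr)" using fl(1) fr(1) by auto
        moreover have "(D \<inter> ?Vl) \<inter> (D \<inter> ?Vr) = {}" using dj by blast
        ultimately show ?thesis using card_Un_disjoint[of "D \<inter> ?Vl" "D \<inter> ?Vr"] by simp
      qed
      moreover have "gp_hat l \<le> enat (card (D \<inter> ?Vl))" unfolding gp_hat_def gamma_pr_def by (rule Inf_card_le[of "paired_dom_set ?Vl ?El", OF a])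
      moreover have "gp_hat r \<le> enat (card (D \<inter> ?Vr))" unfolding gp_hat_def gamma_pr_def by (rule Inf_card_le[of "paired_dom_set ?Vr ?Er", OF b])
      ultimately show "gp_hat l + gp_hat r \<le> x" using D(2) add_mono[of "gp_hat l" "enat (card (D \<inter> ?Vl))" "gp_hat r" "enat (card (D \<inter> ?Vr))"] by simp
    qed
    show ?thesis using le ge by simp
  next
    case False
    have none: "\<not>(\<exists>D. paired_dom_set (?Vl \<union> ?Vr) (?El \<union> ?Er) D)"
    proof
      assume "\<exists>D. paired_dom_set (?Vl \<union> ?Vr) (?El \<union> ?Er) D"
      then obtain D where D: "paired_dom_set (?Vl \<union> ?Vr) (?El \<union> ?Er) D" by blast
      have a: "paired_dom_set ?Vl ?El (D \<inter> ?Vl)" using pds_restrict[OF D(1) dj fl(2) fr(2)] .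
      have b: "paired_dom_set ?Vr ?Er (D \<inter> ?Vr)"
        using pds_restrict[of ?Vr ?Vl ?Er ?El D] D(1) dj' fl(2) fr(2) by (simp add: Un_commute)
      show False using False a b by blast
    qed
    have "gp_hat (Node FalseTwin l r) = \<infinity>" unfolding v gamma_pr_def using Inf_card_none[OF none] .
    moreover have "gp_hat l = \<infinity> \<or> gp_hat r = \<infinity>"
    proof (cases "\<exists>D. paired_dom_set ?Vl ?El D")
      case True
      then have "\<not>(\<exists>D. paired_dom_set ?Vr ?Er D)" using False by blast
      then have "gp_hat r = \<infinity>" unfolding gp_hat_def gamma_pr_def by (rule Inf_card_none)
      then show ?thesis by blast
    next
      case False
      then have "gp_hat l = \<infinity>" unfolding gp_hat_def gamma_pr_def by (rule Inf_card_none)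
      then show ?thesis by blast
    qed
    ultimately show ?thesis by auto
  qed
qed



lemma extend:
  assumes wf: "wf_dtree (Node c l r)" and c: "c \<noteq> FalseTwin"
    and S: "k_feasible 0 (Node c l r) S"
  shows "\<exists>D. paired_dom_set (tverts (Node c l r)) (tedges (Node c l r)) D \<and> card D \<le> card S + 2"
proof -
  let ?v = "Node c l r"
  let ?V = "tverts ?v" and ?E = "tedges ?v"
  have fl: "finite (tverts l)" "tts l \<subseteq> tverts l" "tts l \<noteq> {}" using tree_facts[of l] wf by auto
  have fr: "finite (tverts r)" "tts r \<subseteq> tverts r" "tts r \<noteq> {}" using tree_facts[of r] wf by auto
  have dj: "tverts l \<inter> tverts r = {}" using wf by simp
  have T: "tts ?v \<subseteq> tts l \<union> tts r" by (cases c) auto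
  have B: "\<And>u w. u \<in> tts l \<Longrightarrow> w \<in> tts r \<Longrightarrow> {u, w} \<in> ?E" using c by (cases c) auto
  have Vv: "?V = tverts l \<union> tverts r" by simp
  have Ssub: "S \<subseteq> ?V" and Sdom: "?V - tts ?v \<subseteq> closed_nbhd ?V ?E S"
    and Spm0: "\<exists>X. X \<subseteq> S \<inter> tts ?v \<and> card X = 0 \<and> has_perfect_matching ?E (S - X)"
    using S unfolding k_feasible_def by auto
  have finV: "finite ?V" using fl fr by simp
  have finS: "finite S" using Ssub finV finite_subset by blast
  have Spm: "has_perfect_matching ?E S"
  proof -
    obtain X where X: "X \<subseteq> S \<inter> tts ?v" "card X = 0" "has_perfect_matching ?E (S - X)" using Spm0 by blast
    have "finite X" using X(1) finS finite_subset by blast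
    then have "X = {}" using X(2) by simp
    then show ?thesis using X(3) by simp
  qed
  show ?thesis
  proof (cases "?V \<subseteq> closed_nbhd ?V ?E S")
    case True
    then show ?thesis using Ssub Spm unfolding paired_dom_set_def by auto
  next
    case False
    then obtain x where x: "x \<in> ?V" "x \<notin> closed_nbhd ?V ?E S" by blast
    have xS: "x \<notin> S" using x unfolding closed_nbhd_def by blast
    have xt: "x \<in> tts l \<union> tts r" using x Sdom T by blast
    have adj: "\<And>y. y \<in> S \<Longrightarrow> {x, y} \<notin> ?E" using x unfolding closed_nbhd_def by blast
    obtain a b where ab: "a \<in> tts l" "b \<in> tts r" "a \<notin> S" "b \<notin> S"
    proof (cases "x \<in> tts l")
      case True
      obtain b where b: "b \<in> tts r" using fr(3) by blast
      have "b \<notin> S" using adj[of b] B[OF True b] by blast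
      then show ?thesis using that True b xS by blast
    next
      case False
      then have xr: "x \<in> tts r" using xt by blast
      obtain a where a: "a \<in> tts l" using fl(3) by blast
      have "{a, x} = {x, a}" by blast
      then have "a \<notin> S" using adj[of a] B[OF a xr] by auto
      then show ?thesis using that a xr xS by blast
    qed
    let ?D = "insert a (insert b S)"
    have abE: "{a, b} \<in> ?E" using B ab by blast
    have aV: "a \<in> ?V" "b \<in> ?V" using ab fl fr by auto
    have Dsub: "?D \<subseteq> ?V" using aV Ssub by blast
    have Ddom: "?V \<subseteq> closed_nbhd ?V ?E ?D"
    proof
      fix y assume y: "y \<in> ?V"
      show "y \<in> closed_nbhd ?V ?E ?D"
      proof (cases "y \<in> tts ?v")
        case False
        then have "y \<in> closed_nbhd ?V ?E S" using y Sdom by blast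
        then show ?thesis unfolding closed_nbhd_def by blast
      next
        case True
        then have "y \<in> tts l \<or> y \<in> tts r" using T by blast
        then show ?thesis
        proof
          assume "y \<in> tts l"
          then have "{y, b} \<in> ?E" using B ab by blast
          then show ?thesis using y unfolding closed_nbhd_def by blast
        next
          assume "y \<in> tts r"
          then have "{a, y} \<in> ?E" using B ab by blast
          moreover have "{y, a} = {a, y}" by blast
          ultimately show ?thesis using y unfolding closed_nbhd_def by auto
        qed
      qed
    qed
    obtain M where M: "M \<subseteq> {e \<in> ?E. e \<subseteq> S}" "\<forall>z\<in>S. \<exists>!e. e \<in> M \<and> z \<in> e"
      using Spm unfolding has_perfect_matching_def by blast
    have Dpm: "has_perfect_matching ?E ?D"
      unfolding has_perfect_matching_def
    proof (intro exI conjI)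
      show "insert {a,b} M \<subseteq> {e \<in> ?E. e \<subseteq> ?D}" using M(1) abE by blast
      show "\<forall>z\<in>?D. \<exists>!e. e \<in> insert {a,b} M \<and> z \<in> e"
      proof
        fix z assume z: "z \<in> ?D"
        show "\<exists>!e. e \<in> insert {a,b} M \<and> z \<in> e"
        proof (cases "z \<in> S")
          case True
          then have "z \<noteq> a" "z \<noteq> b" using ab by auto
          then show ?thesis using M(2) True by auto
        next
          case False
          then have "z = a \<or> z = b" using z by blast
          moreover have "\<forall>e\<in>M. z \<notin> e" using M(1) False by blast
          ultimately show ?thesis by blast
        qed
      qed
    qed
    have "card ?D \<le> card S + 2" using finS by (simp add: card_insert_if)
    then show ?thesis using Dsub Ddom Dpm unfolding paired_dom_set_def by blast
  qed
qed



lemma par: assumes "(a::nat) \<noteq> b" "even a" "even b" "a \<le> b + 2" "b \<le> a" shows "a = b + 2"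
proof -
  obtain k where k: "a = 2 * k" using assms(2) by (elim evenE)
  obtain m where m: "b = 2 * m" using assms(3) by (elim evenE)
  have "k \<noteq> m" "m \<le> k" "k \<le> m + 1" using assms k m by auto
  then have "k = m + 1" by linarith
  then show ?thesis using k m by simp
qed
lemma a2: "enat (b + 2) = enat b + 2 * enat 1"
proof -
  have "enat (b + 2) = enat b + enat 2" by (simp only: plus_enat_simps(1))
  also have "enat 2 = 2 * enat 1" by (metis enat_numeral mult.right_neutral one_enat_def)
  finally show ?thesis .
qed
lemma non_false:
  assumes wf: "wf_dtree v" and vdef: "v = Node c l r" and c: "c \<noteq> FalseTwin"
  shows "gp_hat v = gk_hat 0 v + 2 * enat (mty_pr v)"
proof -
  let ?V = "tverts v" and ?E = "tedges v"
  have tf: "finite ?V" "\<forall>e\<in>?E. e \<subseteq> ?V \<and> card e = 2" using tree_facts[OF wf] by auto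
  have pds_feas: "k_feasible 0 v D" if PD: "paired_dom_set ?V ?E D" for D
  proof -
    have a: "D \<subseteq> ?V" "?V \<subseteq> closed_nbhd ?V ?E D" "has_perfect_matching ?E D"
      using PD unfolding paired_dom_set_def by simp_all
    have b: "?V - tts v \<subseteq> closed_nbhd ?V ?E D" using a(2) by blast
    have c: "\<exists>X. X \<subseteq> D \<inter> tts v \<and> card X = 0 \<and> has_perfect_matching ?E (D - X)"
      by (rule exI[of _ "{}"]) (simp add: a(3))
    show ?thesis unfolding k_feasible_def using a(1) b c by blast
  qed
  have le0: "gk_hat 0 v \<le> gp_hat v"
    unfolding gk_hat_def gp_hat_def gamma_pr_def
  proof (rule Inf_superset_mono)
    show "{enat (card D) |D. paired_dom_set ?V ?E D} \<subseteq> {enat (card S) |S. k_feasible 0 v S}"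
    proof
      fix x assume "x \<in> {enat (card D) |D. paired_dom_set ?V ?E D}"
      then obtain D where "paired_dom_set ?V ?E D" "x = enat (card D)" by blast
      then show "x \<in> {enat (card S) |S. k_feasible 0 v S}" using pds_feas by blast
    qed
  qed
  have evenS: "\<And>S. k_feasible 0 v S \<Longrightarrow> even (card S)"
  proof -
    fix S assume S: "k_feasible 0 v S"
    have finS: "finite S" using S tf(1) unfolding k_feasible_def using finite_subset by blast
    obtain X where X: "X \<subseteq> S \<inter> tts v" "card X = 0" "has_perfect_matching ?E (S - X)"
      using S unfolding k_feasible_def by blast
    have "finite X" using X(1) finS finite_subset by blast
    then have "X = {}" using X(2) by simp
    then show "even (card S)" using pm_even[of ?E S] X(3) finS tf(2) by simp
  qed
  show ?thesis
  proof (cases "\<exists>S. k_feasible 0 v S")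
    case False
    then have "gk_hat 0 v = \<infinity>" unfolding gk_hat_def by (rule Inf_card_none)
    then show ?thesis using le0 by simp
  next
    case True
    have "\<exists>S. k_feasible 0 v S \<and> gk_hat 0 v = enat (card S)"
      unfolding gk_hat_def by (rule Inf_card_ex) (use True in blast)
    then obtain S where S: "k_feasible 0 v S" "gk_hat 0 v = enat (card S)" by blast
    obtain D0 where D0: "paired_dom_set ?V ?E D0" "card D0 \<le> card S + 2"
      using extend[of c l r S] wf c S(1) unfolding vdef by blast
    have "\<exists>D. paired_dom_set ?V ?E D \<and> gp_hat v = enat (card D)"
      unfolding gp_hat_def gamma_pr_def by (rule Inf_card_ex) (use D0 in blast)
    then obtain D where D: "paired_dom_set ?V ?E D" "gp_hat v = enat (card D)" by blast
    have "gp_hat v \<le> enat (card D0)" unfolding gp_hat_def gamma_pr_def by (rule Inf_card_le[of "paired_dom_set ?V ?E", OF D0(1)])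
    then have up: "card D \<le> card S + 2" using D(2) D0(2) by simp
    have lo: "card S \<le> card D" using le0 S(2) D(2) by simp
    have DDp: "D \<in> Dp_hat v" unfolding Dp_hat_def using D by simp
    show ?thesis
    proof (cases "Dp_hat v \<inter> Dk_hat 0 v = {}")
      case False
      then obtain D' where "D' \<in> Dp_hat v" "D' \<in> Dk_hat 0 v" by blast
      then have "enat (card D') = gp_hat v" "enat (card D') = gk_hat 0 v" unfolding Dp_hat_def Dk_hat_def by simp_all
      then have "gp_hat v = gk_hat 0 v" by simp
      then show ?thesis using False unfolding mty_pr_def by (simp add: zero_enat_def[symmetric])
    next
      case True
      have "card D \<noteq> card S"
      proof
        assume "card D = card S"
        then have "D \<in> Dk_hat 0 v" unfolding Dk_hat_def using pds_feas[OF D(1)] S(2) by simp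
        then show False using True DDp by blast
      qed
      moreover have "even (card D)" "even (card S)" using evenS[OF pds_feas[OF D(1)]] evenS[OF S(1)] by simp_all
      ultimately have cD: "card D = card S + 2" using up lo par by blast
      have "mty_pr v = 1" using True unfolding mty_pr_def by simp
      then show ?thesis using D(2) S(2) cD a2[of "card S"] by simp
    qed
  qed
qed


theorem lemma2:
  fixes V :: "'a set" and E :: "'a set set" and T v vl vr :: "'a dtree" and c :: label
  assumes "is_decomp_tree V E T"
    and "v \<in> subtrees T"
    and "v = Node c vl vr"
  shows "(c = FalseTwin \<longrightarrow> gp_hat v = gp_hat vl + gp_hat vr) \<and>
         (c \<noteq> FalseTwin \<longrightarrow> gp_hat v = gk_hat 0 v + 2 * enat (mty_pr v))"
proof -
  have wf: "wf_dtree v" using subtree_wf assms unfolding is_decomp_tree_def by blast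
  show ?thesis using false_twin[of vl vr] non_false[OF wf assms(3)] wf assms(3) by auto
qed

end
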